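(* Let $T$ be a complete o-minimal theory expanding the theory of real closed ordered fields. Let $(\mathbb{U},\mathcal{O}')\models T_{\mathrm{convex}}$, let $\mathbb{E}\preceq\mathbb{E}_1\prec\mathbb{U}$ with $\mathbb{E}\not\subseteq\mathcal{O}'$, and let $x\in\mathbb{U}\setminus\mathbb{E}$. Set $\mathcal{O}:=\mathcal{O}'\cap\mathbb{E}$ and $\mathcal{O}_1:=\mathcal{O}'\cap\mathbb{E}_1$. Suppose that no element of $\mathbb{E}_1$ realizes $\mathrm{tp}(x/\mathbb{E})$ (the type in the sense of $T$). Then $x$ is weakly immediate over $(\mathbb{E},\mathcal{O})$ if and only if it is weakly immediate over $(\mathbb{E}_1,\mathcal{O}_1)$. If this is the case, then $\mathrm{tp}(x/(\mathbb{E},\mathcal{O}))$ and $\mathrm{tp}(x/(\mathbb{E}_1,\mathcal{O}_1))$ have the same cofinality.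
   Context: $T_{\mathrm{convex}}$ is the theory of pairs $(\mathbb{U},\mathcal{O}')$ with $\mathbb{U}\models T$ and $\mathcal{O}'\ne\mathbb{U}$ a convex subring closed under all continuous $\emptyset$-definable functions. For $\mathbb{F}\preceq\mathbb{U}$, $x$ is weakly immediate over $(\mathbb{F},\mathcal{O}'\cap\mathbb{F})$ if $\{\mathrm{val}_{\mathcal{O}'}(x-c):c\in\mathbb{F}\}$ has no maximum; the cofinality of its type is the cofinality of this ordered set. *)

theory Defs
  imports "HOL-Computational_Algebra.Polynomial" "HOL-Library.Equipollence"
begin

text \<open>Terms and formulas over a signature with function symbols 'f and relation
symbols 'r (each symbol may be used at any arity; its interpretation is a function
on lists). Variables are natural numbers.\<close>

datatype 'f trm = Var nat | Fn 'f "'f trm list"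

datatype ('f, 'r) fm =
    Eq "'f trm" "'f trm"
  | Rel 'r "'f trm list"
  | Neg "('f, 'r) fm"
  | Conj "('f, 'r) fm" "('f, 'r) fm"
  | Ex nat "('f, 'r) fm"

fun evt :: "('f \<Rightarrow> 'a list \<Rightarrow> 'a) \<Rightarrow> (nat \<Rightarrow> 'a) \<Rightarrow> 'f trm \<Rightarrow> 'a" where
  "evt F \<sigma> (Var n) = \<sigma> n"
| "evt F \<sigma> (Fn f ts) = F f (map (evt F \<sigma>) ts)"

fun sat :: "'a set \<Rightarrow> ('f \<Rightarrow> 'a list \<Rightarrow> 'a) \<Rightarrow> ('r \<Rightarrow> 'a list \<Rightarrow> bool)
             \<Rightarrow> ('f, 'r) fm \<Rightarrow> (nat \<Rightarrow> 'a) \<Rightarrow> bool" where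
  "sat D F R (Eq s t) \<sigma> = (evt F \<sigma> s = evt F \<sigma> t)"
| "sat D F R (Rel r ts) \<sigma> = R r (map (evt F \<sigma>) ts)"
| "sat D F R (Neg \<phi>) \<sigma> = (\<not> sat D F R \<phi> \<sigma>)"
| "sat D F R (Conj \<phi> \<psi>) \<sigma> = (sat D F R \<phi> \<sigma> \<and> sat D F R \<psi> \<sigma>)"
| "sat D F R (Ex n \<phi>) \<sigma> = (\<exists>a\<in>D. sat D F R \<phi> (\<sigma>(n := a)))"

text \<open>E is (the domain of) an elementary substructure of the structure on UNIV.\<close>
definition elem_sub :: "('f \<Rightarrow> 'a list \<Rightarrow> 'a) \<Rightarrow> ('r \<Rightarrow> 'a list \<Rightarrow> bool) \<Rightarrow> 'a set \<Rightarrow> bool" where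
  "elem_sub F R E \<longleftrightarrow> E \<noteq> {} \<and> (\<forall>f xs. set xs \<subseteq> E \<longrightarrow> F f xs \<in> E) \<and>
     (\<forall>\<phi> \<sigma>. range \<sigma> \<subseteq> E \<longrightarrow> (sat E F R \<phi> \<sigma> \<longleftrightarrow> sat UNIV F R \<phi> \<sigma>))"

definition expands_orf :: "('f \<Rightarrow> ('a::linordered_field) list \<Rightarrow> 'a) \<Rightarrow> ('r \<Rightarrow> 'a list \<Rightarrow> bool) \<Rightarrow> bool" where
  "expands_orf F R \<longleftrightarrow> (\<exists>fp ft fn f0 f1 rl.
     (\<forall>a b. F fp [a, b] = a + b) \<and> (\<forall>a b. F ft [a, b] = a * b) \<and> (\<forall>a. F fn [a] = - a) \<and>
     F f0 [] = 0 \<and> F f1 [] = 1 \<and> (\<forall>a b. R rl [a, b] \<longleftrightarrow> a < b))"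

definition real_closed :: "'a::linordered_field itself \<Rightarrow> bool" where
  "real_closed _ \<longleftrightarrow> (\<forall>a::'a. a \<ge> 0 \<longrightarrow> (\<exists>b. b * b = a)) \<and>
     (\<forall>p::'a poly. odd (degree p) \<longrightarrow> (\<exists>b. poly p b = 0))"

definition is_interval :: "('a::linorder) set \<Rightarrow> bool" where
  "is_interval S \<longleftrightarrow> (\<exists>a b. a < b \<and> S = {a<..<b}) \<or> (\<exists>b. S = {..<b}) \<or> (\<exists>a. S = {a<..}) \<or> S = UNIV"

definition o_minimal :: "('f \<Rightarrow> ('a::linorder) list \<Rightarrow> 'a) \<Rightarrow> ('r \<Rightarrow> 'a list \<Rightarrow> bool) \<Rightarrow> bool" where
  "o_minimal F R \<longleftrightarrow> (\<forall>\<phi> \<sigma>. \<exists>C. finite C \<and> (\<forall>S\<in>C. is_interval S \<or> (\<exists>a. S = {a})) \<and>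
       {a. sat UNIV F R \<phi> (\<sigma>(0 := a))} = \<Union>C)"

text \<open>f (on n-tuples, given as lists of length n) is definable without parameters.\<close>
definition zero_definable_fun :: "('f \<Rightarrow> 'a list \<Rightarrow> 'a) \<Rightarrow> ('r \<Rightarrow> 'a list \<Rightarrow> bool) \<Rightarrow> nat \<Rightarrow> ('a list \<Rightarrow> 'a) \<Rightarrow> bool" where
  "zero_definable_fun F R n f \<longleftrightarrow> (\<exists>\<phi>. \<forall>\<sigma> xs y. length xs = n \<longrightarrow>
     (sat UNIV F R \<phi> (\<lambda>i. if i < n then xs ! i else if i = n then y else \<sigma> i) \<longleftrightarrow> f xs = y))"

definition cont_fun :: "nat \<Rightarrow> (('a::linordered_field) list \<Rightarrow> 'a) \<Rightarrow> bool" where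
  "cont_fun n f \<longleftrightarrow> (\<forall>xs. length xs = n \<longrightarrow> (\<forall>e>0. \<exists>d>0. \<forall>ys. length ys = n \<longrightarrow>
      (\<forall>i<n. \<bar>ys ! i - xs ! i\<bar> < d) \<longrightarrow> \<bar>f ys - f xs\<bar> < e))"

definition convex_subring :: "('a::linordered_field) set \<Rightarrow> bool" where
  "convex_subring Ov \<longleftrightarrow> 0 \<in> Ov \<and> 1 \<in> Ov \<and> (\<forall>a\<in>Ov. \<forall>b\<in>Ov. a + b \<in> Ov \<and> a - b \<in> Ov \<and> a * b \<in> Ov)
     \<and> (\<forall>a\<in>Ov. \<forall>b\<in>Ov. \<forall>c. a \<le> c \<and> c \<le> b \<longrightarrow> c \<in> Ov)"

definition T_convex :: "('f \<Rightarrow> ('a::linordered_field) list \<Rightarrow> 'a) \<Rightarrow> ('r \<Rightarrow> 'a list \<Rightarrow> bool) \<Rightarrow> 'a set \<Rightarrow> bool" where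
  "T_convex F R Ov \<longleftrightarrow> Ov \<noteq> UNIV \<and> convex_subring Ov \<and>
     (\<forall>n f. zero_definable_fun F R n f \<and> cont_fun n f \<longrightarrow>
        (\<forall>xs. length xs = n \<and> set xs \<subseteq> Ov \<longrightarrow> f xs \<in> Ov))"

definition realizes_type_in :: "('f \<Rightarrow> 'a list \<Rightarrow> 'a) \<Rightarrow> ('r \<Rightarrow> 'a list \<Rightarrow> bool) \<Rightarrow> 'a set \<Rightarrow> 'a set \<Rightarrow> 'a \<Rightarrow> bool" where
  "realizes_type_in F R E E1 x \<longleftrightarrow> (\<exists>y\<in>E1. \<forall>\<phi> \<sigma>. range \<sigma> \<subseteq> E \<longrightarrow>
      (sat UNIV F R \<phi> (\<sigma>(0 := x)) \<longleftrightarrow> sat UNIV F R \<phi> (\<sigma>(0 := y))))"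

text \<open>val_O(a) \<le> val_O(b).\<close>
definition val_le :: "('a::field) set \<Rightarrow> 'a \<Rightarrow> 'a \<Rightarrow> bool" where
  "val_le Ov a b \<longleftrightarrow> (if a = 0 then b = 0 else b / a \<in> Ov)"

text \<open>val_O(a), as the equivalence class of a.\<close>
definition val :: "('a::field) set \<Rightarrow> 'a \<Rightarrow> 'a set" where
  "val Ov a = {b. val_le Ov a b \<and> val_le Ov b a}"

definition val_ord :: "('a::field) set \<Rightarrow> 'a set \<Rightarrow> 'a set \<Rightarrow> bool" where
  "val_ord Ov v w \<longleftrightarrow> (\<exists>a b. v = val Ov a \<and> w = val Ov b \<and> val_le Ov a b)"

definition val_set :: "('a::field) set \<Rightarrow> 'a \<Rightarrow> 'a set \<Rightarrow> 'a set set" where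
  "val_set Ov x K = (\<lambda>c. val Ov (x - c)) ` K"

definition weakly_immediate :: "('a::field) set \<Rightarrow> 'a set \<Rightarrow> 'a \<Rightarrow> bool" where
  "weakly_immediate Ov K x \<longleftrightarrow> \<not> (\<exists>m\<in>val_set Ov x K. \<forall>v\<in>val_set Ov x K. val_ord Ov v m)"

definition cofinal_in :: "('b \<Rightarrow> 'b \<Rightarrow> bool) \<Rightarrow> 'b set \<Rightarrow> 'b set \<Rightarrow> bool" where
  "cofinal_in le S A \<longleftrightarrow> A \<subseteq> S \<and> (\<forall>s\<in>S. \<exists>a\<in>A. le s a)"

definition same_cofinality :: "('b \<Rightarrow> 'b \<Rightarrow> bool) \<Rightarrow> 'b set \<Rightarrow> ('c \<Rightarrow> 'c \<Rightarrow> bool) \<Rightarrow> 'c set \<Rightarrow> bool" where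
  "same_cofinality le1 S1 le2 S2 \<longleftrightarrow> (\<exists>A B. cofinal_in le1 S1 A \<and> cofinal_in le2 S2 B \<and>
      (\<forall>A'. cofinal_in le1 S1 A' \<longrightarrow> A \<lesssim> A') \<and> (\<forall>B'. cofinal_in le2 S2 B' \<longrightarrow> B \<lesssim> B') \<and>
      A \<approx> B)"

end

theory Submission
  imports Defs
begin


lemma exists_min_lepoll:
  fixes P :: "'b set \<Rightarrow> bool"
  assumes "P A0"
  shows "\<exists>A. P A \<and> (\<forall>A'. P A' \<longrightarrow> A \<lesssim> A')"
proof -
  define Q where "Q = {card_of A | A. P A}"
  have "card_of A0 \<in> Q" using assms Q_def by blast
  then obtain r where r: "r \<in> Q" and rmin: "\<And>r'. (r', r) \<in> ordLess \<Longrightarrow> r' \<notin> Q"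
    using wfE_min[OF wf_ordLess, of "card_of A0" Q] by blast
  then obtain A where A: "P A" "r = card_of A" unfolding Q_def by blast
  show ?thesis
  proof (intro exI conjI allI impI)
    show "P A" by fact
    fix A' assume "P A'"
    then have "card_of A' \<in> Q" unfolding Q_def by blast
    then have "(card_of A', card_of A) \<notin> ordLess" using rmin A by blast
    then have "(card_of A, card_of A') \<in> ordLeq" 
      using not_ordLeq_iff_ordLess[OF card_of_Well_order card_of_Well_order] by blast
    then show "A \<lesssim> A'" unfolding lepoll_def by (simp add: card_of_ordLeq[symmetric])
  qed
qed



lemma order_part:
  fixes le :: "'b \<Rightarrow> 'b \<Rightarrow> bool"
  assumes sub: "S1 \<subseteq> S2"
    and refl: "\<And>s. s \<in> S2 \<Longrightarrow> le s s"
    and trans: "\<And>u v w. le u v \<Longrightarrow> le v w \<Longrightarrow> le u w"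
    and cof: "\<And>s. s \<in> S2 \<Longrightarrow> \<exists>s'\<in>S1. le s s'"
  shows "(\<not> (\<exists>m\<in>S1. \<forall>v\<in>S1. le v m) \<longleftrightarrow> \<not> (\<exists>m\<in>S2. \<forall>v\<in>S2. le v m))"
    and "same_cofinality le S1 le S2"
proof -
  show "(\<not> (\<exists>m\<in>S1. \<forall>v\<in>S1. le v m) \<longleftrightarrow> \<not> (\<exists>m\<in>S2. \<forall>v\<in>S2. le v m))"
  proof
    assume n1: "\<not> (\<exists>m\<in>S1. \<forall>v\<in>S1. le v m)"
    show "\<not> (\<exists>m\<in>S2. \<forall>v\<in>S2. le v m)"
    proof
      assume "\<exists>m\<in>S2. \<forall>v\<in>S2. le v m"
      then obtain m where m: "m \<in> S2" "\<forall>v\<in>S2. le v m" by blast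
      obtain m' where "m' \<in> S1" "le m m'" using cof m by blast
      then have "\<forall>v\<in>S1. le v m'" using m sub trans by blast
      then show False using n1 \<open>m' \<in> S1\<close> by blast
    qed
  next
    assume n2: "\<not> (\<exists>m\<in>S2. \<forall>v\<in>S2. le v m)"
    show "\<not> (\<exists>m\<in>S1. \<forall>v\<in>S1. le v m)"
    proof
      assume "\<exists>m\<in>S1. \<forall>v\<in>S1. le v m"
      then obtain m where m: "m \<in> S1" "\<forall>v\<in>S1. le v m" by blast
      have "\<forall>v\<in>S2. le v m"
      proof
        fix v assume "v \<in> S2"
        then obtain s' where "s' \<in> S1" "le v s'" using cof by blast
        then show "le v m" using m trans by blast
      qed
      then show False using n2 m sub by blast
    qed
  qed
  have c1: "cofinal_in le S1 S1" unfolding cofinal_in_def using refl sub by blast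
  have c2: "cofinal_in le S2 S2" unfolding cofinal_in_def using refl by blast
  obtain A where A: "cofinal_in le S1 A" "\<forall>A'. cofinal_in le S1 A' \<longrightarrow> A \<lesssim> A'"
    using exists_min_lepoll[of "cofinal_in le S1", OF c1] by blast
  obtain B where B: "cofinal_in le S2 B" "\<forall>B'. cofinal_in le S2 B' \<longrightarrow> B \<lesssim> B'"
    using exists_min_lepoll[of "cofinal_in le S2", OF c2] by blast
  have "cofinal_in le S2 A"
    unfolding cofinal_in_def
  proof
    show "A \<subseteq> S2" using A(1) sub unfolding cofinal_in_def by blast
    show "\<forall>s\<in>S2. \<exists>a\<in>A. le s a"
    proof
      fix s assume "s \<in> S2"
      then obtain s' where "s' \<in> S1" "le s s'" using cof by blast
      then obtain a where "a \<in> A" "le s' a" using A(1) unfolding cofinal_in_def by blast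
      then show "\<exists>a\<in>A. le s a" using trans \<open>le s s'\<close> by blast
    qed
  qed
  then have BA: "B \<lesssim> A" using B by blast
  define g where "g b = (SOME s. s \<in> S1 \<and> le b s)" for b
  have g: "g b \<in> S1 \<and> le b (g b)" if "b \<in> B" for b
  proof -
    have "b \<in> S2" using that B(1) unfolding cofinal_in_def by blast
    then have "\<exists>s. s \<in> S1 \<and> le b s" using cof by blast
    then show ?thesis unfolding g_def by (rule someI_ex)
  qed
  have "cofinal_in le S1 (g ` B)"
    unfolding cofinal_in_def
  proof
    show "g ` B \<subseteq> S1" using g by blast
    show "\<forall>s\<in>S1. \<exists>a\<in>g ` B. le s a"
    proof
      fix s assume "s \<in> S1"
      then have "s \<in> S2" using sub by blast
      then obtain b where "b \<in> B" "le s b" using B(1) unfolding cofinal_in_def by blast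
      then show "\<exists>a\<in>g ` B. le s a" using g trans by blast
    qed
  qed
  then have "A \<lesssim> g ` B" using A by blast
  then have AB: "A \<lesssim> B" using image_lepoll lepoll_trans by blast
  show "same_cofinality le S1 le S2"
    unfolding same_cofinality_def using A B AB BA lepoll_antisym by blast
qed



lemma vle_refl: "convex_subring Op \<Longrightarrow> val_le Op a a"
  unfolding val_le_def convex_subring_def by auto

lemma vle_trans:
  fixes Op :: "'a::linordered_field set"
  assumes "convex_subring Op" "val_le Op a b" "val_le Op b c" shows "val_le Op a c"
proof (cases "a = 0")
  case True then show ?thesis using assms unfolding val_le_def by auto
next
  case False
  show ?thesis
  proof (cases "b = 0")
    case True then show ?thesis using assms False unfolding val_le_def by (auto simp: convex_subring_def)
  next
    case bnz: False
    have "c / a = (c / b) * (b / a)" using bnz by simp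
    moreover have "c / b \<in> Op" "b / a \<in> Op" using assms False bnz unfolding val_le_def by auto
    ultimately show ?thesis using assms(1) False unfolding val_le_def convex_subring_def by metis
  qed
qed

lemma val_eq_imp:
  assumes "convex_subring Op" "val Op a = val Op b"
  shows "val_le Op a b \<and> val_le Op b a"
proof -
  have "b \<in> val Op b" unfolding val_def using vle_refl[OF assms(1)] by blast
  then show ?thesis using assms(2) unfolding val_def by blast
qed

lemma val_ord_val:
  fixes Op :: "'a::linordered_field set"
  assumes "convex_subring Op"
  shows "val_ord Op (val Op a) (val Op b) \<longleftrightarrow> val_le Op a b"
proof
  assume "val_ord Op (val Op a) (val Op b)"
  then obtain a' b' where "val Op a = val Op a'" "val Op b = val Op b'" "val_le Op a' b'"
    unfolding val_ord_def by blast
  then show "val_le Op a b" using val_eq_imp[OF assms] vle_trans[OF assms] by metis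
next
  assume "val_le Op a b" then show "val_ord Op (val Op a) (val Op b)" unfolding val_ord_def by blast
qed

lemma val_ord_trans:
  fixes Op :: "'a::linordered_field set"
  assumes "convex_subring Op" "val_ord Op u v" "val_ord Op v w" shows "val_ord Op u w"
proof -
  obtain a b where ab: "u = val Op a" "v = val Op b" "val_le Op a b" using assms(2) unfolding val_ord_def by blast
  obtain b' c where bc: "v = val Op b'" "w = val Op c" "val_le Op b' c" using assms(3) unfolding val_ord_def by blast
  have "val_le Op b b'" using val_eq_imp[OF assms(1)] ab bc by metis
  then have "val_le Op a c" using vle_trans[OF assms(1)] ab bc by metis
  then show ?thesis using ab bc unfolding val_ord_def by blast
qed

lemma approx_vle:
  fixes Op :: "'a::linordered_field set"
  assumes cs: "convex_subring Op" and "x \<noteq> c"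
    and "(c \<le> e \<and> e \<le> x) \<or> (x \<le> e \<and> e \<le> c)"
  shows "val_le Op (x - c) (x - e)"
proof -
  have "0 \<le> (x - e) / (x - c) \<and> (x - e) / (x - c) \<le> 1"
    using assms(2,3) by (auto simp: divide_simps)
  moreover have "0 \<in> Op" "1 \<in> Op" using cs unfolding convex_subring_def by auto
  ultimately have "(x - e) / (x - c) \<in> Op" using cs unfolding convex_subring_def by blast
  then show ?thesis using assms(2) unfolding val_le_def by auto
qed

lemma val_part:
  fixes Op :: "'a::linordered_field set"
  assumes cs: "convex_subring Op" and sub: "E \<subseteq> E1" and xn: "x \<notin> E1"
    and approx: "\<And>c. c \<in> E1 \<Longrightarrow> \<exists>e\<in>E. (c \<le> e \<and> e \<le> x) \<or> (x \<le> e \<and> e \<le> c)"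
  shows "(weakly_immediate Op E x \<longleftrightarrow> weakly_immediate Op E1 x) \<and>
         (weakly_immediate Op E x \<longrightarrow>
            same_cofinality (val_ord Op) (val_set Op x E) (val_ord Op) (val_set Op x E1))"
proof -
  have hs: "val_set Op x E \<subseteq> val_set Op x E1" using sub unfolding val_set_def by blast
  have hr: "val_ord Op s s" if "s \<in> val_set Op x E1" for s
    using that val_ord_val[OF cs] vle_refl[OF cs] unfolding val_set_def by blast
  have ht: "\<And>u v w. val_ord Op u v \<Longrightarrow> val_ord Op v w \<Longrightarrow> val_ord Op u w"
    using val_ord_trans[OF cs] by blast
  have hc: "\<exists>s'\<in>val_set Op x E. val_ord Op s s'" if sin: "s \<in> val_set Op x E1" for s
  proof -
    obtain c where c: "c \<in> E1" "s = val Op (x - c)" using sin unfolding val_set_def by blast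
    obtain e where e: "e \<in> E" "(c \<le> e \<and> e \<le> x) \<or> (x \<le> e \<and> e \<le> c)" using approx c by blast
    have "x \<noteq> c" using c xn by blast
    then have "val_le Op (x - c) (x - e)" using approx_vle[OF cs] e by blast
    then show ?thesis using c e val_ord_val[OF cs] unfolding val_set_def by blast
  qed
  have o1: "(\<not> (\<exists>m\<in>val_set Op x E. \<forall>v\<in>val_set Op x E. val_ord Op v m) \<longleftrightarrow> \<not> (\<exists>m\<in>val_set Op x E1. \<forall>v\<in>val_set Op x E1. val_ord Op v m))"
    by (rule order_part(1)) (fact hs, fact hr, rule ht, assumption+, fact hc)
  have o2: "same_cofinality (val_ord Op) (val_set Op x E) (val_ord Op) (val_set Op x E1)"
    by (rule order_part(2)) (fact hs, fact hr, rule ht, assumption+, fact hc)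
  show ?thesis using o1 o2 unfolding weakly_immediate_def by blast
qed



definition piece :: "('a::linorder) set \<Rightarrow> bool" where
  "piece S \<longleftrightarrow> is_interval S \<or> (\<exists>a. S = {a})"

lemma interval_contains:
  fixes J :: "'a::linordered_field set"
  assumes "is_interval J" shows "\<exists>y0 y1. y0 < y1 \<and> {y0<..<y1} \<subseteq> J"
  using assms unfolding is_interval_def
proof (elim disjE exE conjE)
  fix a b :: 'a assume "a < b" "J = {a<..<b}" then show ?thesis by blast
next
  fix b :: 'a assume "J = {..<b}" then show ?thesis by (intro exI[of _ "b - 1"] exI[of _ b]) auto
next
  fix a :: 'a assume "J = {a<..}" then show ?thesis by (intro exI[of _ "a"] exI[of _ "a + 1"]) auto
next
  assume "J = UNIV" then show ?thesis by (intro exI[of _ "0::'a"] exI[of _ "1::'a"]) auto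
qed

definition supP :: "('a::linordered_field) set \<Rightarrow> bool" where
  "supP S \<longleftrightarrow> S = {} \<or> (\<exists>p. (\<forall>t>p. t \<notin> S) \<and> (\<forall>t<p. \<exists>s\<in>S. t \<le> s))"

lemma supP_Un: "supP A \<Longrightarrow> supP B \<Longrightarrow> supP (A \<union> B)"
  unfolding supP_def
proof (elim disjE exE conjE)
  fix p q :: 'a
  assume a: "\<forall>t>p. t \<notin> A" "\<forall>t<p. \<exists>s\<in>A. t \<le> s" and b: "\<forall>t>q. t \<notin> B" "\<forall>t<q. \<exists>s\<in>B. t \<le> s"
  show "A \<union> B = {} \<or> (\<exists>p. (\<forall>t>p. t \<notin> A \<union> B) \<and> (\<forall>t<p. \<exists>s\<in>A \<union> B. t \<le> s))"
  proof (cases "p \<le> q")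
    case True
    then show ?thesis using a b by (intro disjI2 exI[of _ q]) auto
  next
    case False
    then show ?thesis using a b by (intro disjI2 exI[of _ p]) auto
  qed
qed auto

lemma supP_piece:
  fixes S :: "'a::linordered_field set"
  assumes "piece S" "\<forall>s\<in>S. s < b" shows "supP S"
  using assms(1) unfolding piece_def is_interval_def
proof (elim disjE exE conjE)
  fix a c :: 'a assume ac: "a < c" "S = {a<..<c}"
  have "\<forall>t<c. \<exists>s\<in>S. t \<le> s"
  proof (intro allI impI)
    fix t assume "t < c"
    show "\<exists>s\<in>S. t \<le> s"
    proof (cases "t \<le> a")
      case True
      have "(a + c) / 2 \<in> S" using ac by (auto simp: field_simps)
      moreover have "t \<le> (a + c) / 2" using True ac by (auto simp: field_simps)
      ultimately show ?thesis by blast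
    next
      case False then show ?thesis using ac \<open>t < c\<close> by auto
    qed
  qed
  then show ?thesis unfolding supP_def using ac by (intro disjI2 exI[of _ c]) auto
next
  fix c :: 'a assume "S = {..<c}" then show ?thesis unfolding supP_def by (intro disjI2 exI[of _ c]) auto
next
  fix a :: 'a assume "S = {a<..}"
  then have "max a b + 1 \<in> S" by (auto simp: max_def)
  then have "max a b + 1 < b" using assms(2) by blast
  moreover have "b \<le> max a b" by simp
  ultimately have False by linarith
  then show ?thesis ..
next
  assume "S = UNIV" then show ?thesis using assms(2) by auto
next
  fix a :: 'a assume "S = {a}" then show ?thesis unfolding supP_def by (intro disjI2 exI[of _ a]) auto
qed



lemma sup_union:
  fixes C :: "'a::linordered_field set set"
  assumes "finite C" "\<forall>S\<in>C. piece S"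
    and dc: "\<And>t t'. t' \<le> t \<Longrightarrow> t \<in> \<Union>C \<Longrightarrow> t' \<in> \<Union>C"
    and "a \<in> \<Union>C" "b \<notin> \<Union>C"
  shows "\<exists>p. (\<forall>t<p. t \<in> \<Union>C) \<and> (\<forall>t>p. t \<notin> \<Union>C)"
proof -
  have lb: "\<forall>s\<in>\<Union>C. s < b" using dc assms(5) by (meson not_le)
  have "supP (\<Union>C)"
    using assms(1,2) lb
  proof (induction C rule: finite_induct)
    case empty then show ?case by (simp add: supP_def)
  next
    case (insert S C)
    then show ?case using supP_Un supP_piece by (metis Union_insert UnCI insert_iff)
  qed
  then obtain p where "(\<forall>t>p. t \<notin> \<Union>C) \<and> (\<forall>t<p. \<exists>s\<in>\<Union>C. t \<le> s)"
    using assms(4) unfolding supP_def by blast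
  then show ?thesis using dc by blast
qed



lemma loc_piece:
  fixes S :: "'a::linordered_field set"
  assumes "piece S"
  shows "\<exists>u>y. (\<forall>s. y < s \<and> s < u \<longrightarrow> s \<in> S) \<or> (\<forall>s. y < s \<and> s < u \<longrightarrow> s \<notin> S)"
  using assms unfolding piece_def is_interval_def
proof (elim disjE exE conjE)
  fix a c :: 'a assume ac: "a < c" "S = {a<..<c}"
  show ?thesis
  proof (cases "y < a")
    case True then show ?thesis using ac by (intro exI[of _ a]) auto
  next
    case f1: False
    show ?thesis
    proof (cases "y < c")
      case True then show ?thesis using ac f1 by (intro exI[of _ c]) auto
    next
      case False then show ?thesis using ac f1 by (intro exI[of _ "y+1"]) auto
    qed
  qed
next
  fix c :: 'a assume ac: "S = {..<c}"
  show ?thesis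
  proof (cases "y < c")
    case True then show ?thesis using ac by (intro exI[of _ c]) auto
  next
    case False then show ?thesis using ac by (intro exI[of _ "y+1"]) auto
  qed
next
  fix a :: 'a assume ac: "S = {a<..}"
  show ?thesis
  proof (cases "y < a")
    case True then show ?thesis using ac by (intro exI[of _ a]) auto
  next
    case False then show ?thesis using ac by (intro exI[of _ "y+1"]) auto
  qed
next
  assume "S = UNIV" then show ?thesis by (intro exI[of _ "y+1"]) auto
next
  fix a :: 'a assume ac: "S = {a}"
  show ?thesis
  proof (cases "y < a")
    case True then show ?thesis using ac by (intro exI[of _ a]) auto
  next
    case False then show ?thesis using ac by (intro exI[of _ "y+1"]) auto
  qed
qed



lemma loc_union:
  fixes C :: "'a::linordered_field set set"
  assumes "finite C" "\<forall>S\<in>C. piece S"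
  shows "\<exists>u>y. (\<forall>s. y < s \<and> s < u \<longrightarrow> s \<in> \<Union>C) \<or> (\<forall>s. y < s \<and> s < u \<longrightarrow> s \<notin> \<Union>C)"
  using assms
proof (induction C rule: finite_induct)
  case empty then show ?case by (intro exI[of _ "y+1"]) auto
next
  case (insert S C)
  obtain u1 where u1: "u1 > y" "(\<forall>s. y < s \<and> s < u1 \<longrightarrow> s \<in> S) \<or> (\<forall>s. y < s \<and> s < u1 \<longrightarrow> s \<notin> S)"
    using loc_piece[of S y] insert.prems by blast
  obtain u2 where u2: "u2 > y" "(\<forall>s. y < s \<and> s < u2 \<longrightarrow> s \<in> \<Union>C) \<or> (\<forall>s. y < s \<and> s < u2 \<longrightarrow> s \<notin> \<Union>C)"
    using insert.IH insert.prems by blast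
  have m: "min u1 u2 > y" using u1 u2 by simp
  have lt: "s < u1" "s < u2" if "s < min u1 u2" for s using that by auto
  show ?case
  proof (cases "\<forall>s. y < s \<and> s < u1 \<longrightarrow> s \<in> S")
    case True
    then have "\<forall>s. y < s \<and> s < min u1 u2 \<longrightarrow> s \<in> \<Union>(insert S C)" using lt by blast
    then show ?thesis using m by blast
  next
    case f1: False
    show ?thesis
    proof (cases "\<forall>s. y < s \<and> s < u2 \<longrightarrow> s \<in> \<Union>C")
      case True
      then have "\<forall>s. y < s \<and> s < min u1 u2 \<longrightarrow> s \<in> \<Union>(insert S C)" using lt by blast
      then show ?thesis using m by blast
    next
      case False
      then have "\<forall>s. y < s \<and> s < min u1 u2 \<longrightarrow> s \<notin> \<Union>(insert S C)" using lt u1 u2 f1 by blast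
      then show ?thesis using m by blast
    qed
  qed
qed




fun tvars :: "'f trm \<Rightarrow> nat set" where
  "tvars (Var n) = {n}"
| "tvars (Fn f ts) = (\<Union>t\<in>set ts. tvars t)"

fun vars :: "('f, 'r) fm \<Rightarrow> nat set" where
  "vars (Eq s t) = tvars s \<union> tvars t"
| "vars (Rel r ts) = (\<Union>t\<in>set ts. tvars t)"
| "vars (Neg \<phi>) = vars \<phi>"
| "vars (Conj \<phi> \<psi>) = vars \<phi> \<union> vars \<psi>"
| "vars (Ex n \<phi>) = insert n (vars \<phi>)"

lemma finite_tvars: "finite (tvars t)"
  by (induction t) auto

lemma finite_vars: "finite (vars \<phi>)"
  by (induction \<phi>) (auto simp: finite_tvars)

lemma evt_cong: "(\<forall>i\<in>tvars t. \<sigma> i = \<tau> i) \<Longrightarrow> evt F \<sigma> t = evt F \<tau> t"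
proof (induction t)
  case (Var n) then show ?case by simp
next
  case (Fn f ts)
  have "\<forall>x\<in>set ts. evt F \<sigma> x = evt F \<tau> x" using Fn by auto
  then have "map (evt F \<sigma>) ts = map (evt F \<tau>) ts" by (simp only: map_eq_conv)
  then show ?case by (simp only: evt.simps)
qed

lemma sat_cong: "(\<forall>i\<in>vars \<phi>. \<sigma> i = \<tau> i) \<Longrightarrow> sat D F R \<phi> \<sigma> = sat D F R \<phi> \<tau>"
proof (induction \<phi> arbitrary: \<sigma> \<tau>)
  case (Eq s t) then show ?case using evt_cong[of s \<sigma> \<tau> F] evt_cong[of t \<sigma> \<tau> F] by simp
next
  case (Rel r ts)
  then have "\<forall>x\<in>set ts. evt F \<sigma> x = evt F \<tau> x" using evt_cong by (metis UN_I vars.simps(2))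
  then have "map (evt F \<sigma>) ts = map (evt F \<tau>) ts" by (simp only: map_eq_conv)
  then show ?case by (simp only: sat.simps)
next
  case (Neg \<phi>) then show ?case by simp
next
  case (Conj \<phi> \<psi>)
  have "sat D F R \<phi> \<sigma> = sat D F R \<phi> \<tau>" using Conj by (intro Conj.IH(1)) auto
  moreover have "sat D F R \<psi> \<sigma> = sat D F R \<psi> \<tau>" using Conj by (intro Conj.IH(2)) auto
  ultimately show ?case by simp
next
  case (Ex n \<phi>)
  have "\<And>a. sat D F R \<phi> (\<sigma>(n := a)) = sat D F R \<phi> (\<tau>(n := a))"
    using Ex by (intro Ex.IH) auto
  then show ?case by simp
qed

lemma fresh_var: "finite V \<Longrightarrow> \<exists>k::nat. k \<notin> V"
  using ex_new_if_finite[OF infinite_UNIV_nat] by blast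

definition fLt :: "'r \<Rightarrow> nat \<Rightarrow> nat \<Rightarrow> ('f, 'r) fm" where
  "fLt rl i j = Rel rl [Var i, Var j]"
definition fOr :: "('f, 'r) fm \<Rightarrow> ('f, 'r) fm \<Rightarrow> ('f, 'r) fm" where
  "fOr \<phi> \<psi> = Neg (Conj (Neg \<phi>) (Neg \<psi>))"
definition fImp :: "('f, 'r) fm \<Rightarrow> ('f, 'r) fm \<Rightarrow> ('f, 'r) fm" where
  "fImp \<phi> \<psi> = Neg (Conj \<phi> (Neg \<psi>))"
definition fAll :: "nat \<Rightarrow> ('f, 'r) fm \<Rightarrow> ('f, 'r) fm" where
  "fAll n \<phi> = Neg (Ex n (Neg \<phi>))"

lemma sat_fOr[simp]: "sat D F R (fOr \<phi> \<psi>) \<sigma> = (sat D F R \<phi> \<sigma> \<or> sat D F R \<psi> \<sigma>)"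
  by (simp add: fOr_def)
lemma sat_fImp[simp]: "sat D F R (fImp \<phi> \<psi>) \<sigma> = (sat D F R \<phi> \<sigma> \<longrightarrow> sat D F R \<psi> \<sigma>)"
  by (simp add: fImp_def)
lemma sat_fAll[simp]: "sat D F R (fAll n \<phi>) \<sigma> = (\<forall>a\<in>D. sat D F R \<phi> (\<sigma>(n := a)))"
  by (simp add: fAll_def)
lemma vars_simps2[simp]: "vars (fLt rl i j) = {i, j}" "vars (fOr \<phi> \<psi>) = vars \<phi> \<union> vars \<psi>"
  "vars (fImp \<phi> \<psi>) = vars \<phi> \<union> vars \<psi>" "vars (fAll n \<phi>) = insert n (vars \<phi>)"
  by (auto simp: fLt_def fOr_def fImp_def fAll_def)

locale omin =
  fixes F :: "'f \<Rightarrow> ('a::linordered_field) list \<Rightarrow> 'a" and R :: "'r \<Rightarrow> 'a list \<Rightarrow> bool" and rl :: 'r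
  assumes rl: "\<And>a b. R rl [a, b] \<longleftrightarrow> a < b"
    and om: "o_minimal F R"
begin

lemma sat_fLt[simp]: "sat D F R (fLt rl i j) \<sigma> = (\<sigma> i < \<sigma> j)"
  by (simp add: fLt_def rl)

definition Def :: "('f, 'r) fm \<Rightarrow> (nat \<Rightarrow> 'a) \<Rightarrow> 'a set" where
  "Def \<phi> \<sigma> = {a. sat UNIV F R \<phi> (\<sigma>(0 := a))}"

lemma rep: "\<exists>C. finite C \<and> (\<forall>S\<in>C. piece S) \<and> Def \<phi> \<sigma> = \<Union>C"
  using om unfolding o_minimal_def Def_def piece_def by blast

lemma Def_Neg: "Def (Neg \<phi>) \<sigma> = - Def \<phi> \<sigma>"
  unfolding Def_def by auto

end



lemma range_upd: "range \<sigma> \<subseteq> E \<Longrightarrow> y \<in> E \<Longrightarrow> range (\<sigma>(n := y)) \<subseteq> E"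
  by auto

context omin begin

lemma elem_transfer:
  assumes "elem_sub F R E" "range \<sigma> \<subseteq> E"
  shows "sat E F R \<phi> \<sigma> \<longleftrightarrow> sat UNIV F R \<phi> \<sigma>"
  using assms unfolding elem_sub_def by blast

lemma fin_in_E:
  assumes es: "elem_sub F R E" and rs: "range \<sigma> \<subseteq> E"
  shows "finite (Def \<phi> \<sigma>) \<Longrightarrow> Def \<phi> \<sigma> \<subseteq> E"
proof -
  have "\<forall>\<phi>. finite (Def \<phi> \<sigma>) \<and> card (Def \<phi> \<sigma>) = n \<longrightarrow> Def \<phi> \<sigma> \<subseteq> E" for n
  proof (induction n rule: less_induct)
    case (less n)
    show ?case
    proof (intro allI impI)
      fix \<phi> assume h: "finite (Def \<phi> \<sigma>) \<and> card (Def \<phi> \<sigma>) = n"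
      let ?D = "Def \<phi> \<sigma>"
      show "?D \<subseteq> E"
      proof (cases "?D = {}")
        case True then show ?thesis by simp
      next
        case ne: False
        obtain k where k: "k \<notin> insert 0 (vars \<phi>)" using fresh_var[of "insert 0 (vars \<phi>)"] finite_vars by blast
        then have k0: "k \<noteq> 0" and kv: "k \<notin> vars \<phi>" by auto
        define m where "m = Max ?D"
        have mD: "m \<in> ?D" using Max_in h ne m_def by blast
        have mmax: "\<forall>z\<in>?D. z \<le> m" using Max_ge h m_def by blast
        define \<chi> where "\<chi> = Conj \<phi> (Ex k (Conj (Eq (Var k) (Var 0)) (fAll 0 (fImp \<phi> (Neg (fLt rl k 0))))))"
        have envk: "sat UNIV F R \<phi> (\<sigma>(k := w, 0 := z)) = sat UNIV F R \<phi> (\<sigma>(0:=z))" for w z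
          by (rule sat_cong) (use kv in auto)
        have envk2: "sat UNIV F R \<phi> (\<sigma>(0 := y, k := w)) = sat UNIV F R \<phi> (\<sigma>(0:=y))" for y w
          by (rule sat_cong) (use kv in auto)
        have chi: "sat UNIV F R \<chi> (\<sigma>(0:=y)) \<longleftrightarrow> y \<in> ?D \<and> (\<forall>z\<in>?D. \<not> y < z)" for y
          unfolding \<chi>_def Def_def by (simp add: k0 envk)
        have "sat UNIV F R \<chi> (\<sigma>(0:=m))" using chi[of m] mD mmax by (simp add: not_less)
        then have "sat UNIV F R (Ex 0 \<chi>) \<sigma>" by (simp only: sat.simps) blast
        then have "sat E F R (Ex 0 \<chi>) \<sigma>" using elem_transfer[OF es rs] by blast
        then obtain y where y: "y \<in> E" "sat E F R \<chi> (\<sigma>(0:=y))" by (simp only: sat.simps) blast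
        have ry: "range (\<sigma>(0:=y)) \<subseteq> E" by (rule range_upd[OF rs y(1)])
        have "sat UNIV F R \<chi> (\<sigma>(0:=y))" using elem_transfer[OF es ry, of \<chi>] y(2) by (rule iffD1)
        then have yD: "y \<in> ?D" and ym: "\<forall>z\<in>?D. \<not> y < z" using chi by blast+
        have "y \<le> m" using mmax yD by blast
        moreover have "\<not> y < m" using ym mD by blast
        ultimately have "y = m" by simp
        then have mE: "m \<in> E" using y by simp
        define \<psi> where "\<psi> = Conj \<phi> (Ex k (Conj (Eq (Var k) (Var 0)) (Ex 0 (Conj \<phi> (fLt rl k 0)))))"
        have psi: "sat UNIV F R \<psi> (\<sigma>(0:=y)) \<longleftrightarrow> y \<in> ?D \<and> (\<exists>z\<in>?D. y < z)" for y
          proof -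
          have "sat UNIV F R \<psi> (\<sigma>(0:=y)) \<longleftrightarrow> sat UNIV F R \<phi> (\<sigma>(0 := y)) \<and> (\<exists>a. sat UNIV F R \<phi> (\<sigma>(0 := a)) \<and> y < a)"
            unfolding \<psi>_def by (simp add: k0 envk)
          then show ?thesis unfolding Def_def by blast
        qed
        have Dpsi: "Def \<psi> \<sigma> = ?D - {m}"
        proof (rule set_eqI)
          fix w
          have "w \<in> Def \<psi> \<sigma> \<longleftrightarrow> w \<in> ?D \<and> (\<exists>z\<in>?D. w < z)" unfolding Def_def[of \<psi>] mem_Collect_eq by (rule psi[of w])
          also have "\<dots> \<longleftrightarrow> w \<in> ?D - {m}"
          proof
            assume "w \<in> ?D \<and> (\<exists>z\<in>?D. w < z)"
            then obtain z where "w \<in> ?D" "z \<in> ?D" "w < z" by blast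
            then have "w < m" using mmax by (blast intro: less_le_trans)
            then show "w \<in> ?D - {m}" using \<open>w \<in> ?D\<close> by blast
          next
            assume "w \<in> ?D - {m}"
            then have "w \<in> ?D" "w \<noteq> m" by blast+
            moreover have "w \<le> m" using mmax \<open>w \<in> ?D\<close> by blast
            ultimately have "w \<in> ?D" "w < m" by simp_all
            then show "w \<in> ?D \<and> (\<exists>z\<in>?D. w < z)" using mD by blast
          qed
          finally show "w \<in> Def \<psi> \<sigma> \<longleftrightarrow> w \<in> ?D - {m}" .
        qed
        have "card (?D - {m}) < n" using h mD ne by (metis card_Diff1_less)
        moreover have "finite (?D - {m})" using h by simp
        ultimately have "Def \<psi> \<sigma> \<subseteq> E" using less.IH[of "card (?D - {m})"] Dpsi by (metis finite_Diff)
        then show ?thesis using mE Dpsi by blast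
      qed
    qed
  qed
  then show "finite (Def \<phi> \<sigma>) \<Longrightarrow> Def \<phi> \<sigma> \<subseteq> E" by blast
qed

end



context omin begin

lemma sep:
  assumes es: "elem_sub F R E" and rs: "range \<sigma> \<subseteq> E" and ab: "a < b"
    and aS: "a \<in> Def \<phi> \<sigma>" and bS: "b \<notin> Def \<phi> \<sigma>"
  shows "\<exists>e\<in>E. a \<le> e \<and> e \<le> b"
proof (rule ccontr)
  assume noE: "\<not> (\<exists>e\<in>E. a \<le> e \<and> e \<le> b)"
  let ?S = "Def \<phi> \<sigma>"
  obtain k where "k \<notin> insert 0 (vars \<phi>)" using fresh_var[of "insert 0 (vars \<phi>)"] finite_vars by blast
  then have k0: "k \<noteq> 0" and kv: "k \<notin> vars \<phi>" by auto
  obtain ka where "ka \<notin> insert k (insert 0 (vars \<phi>))" using fresh_var[of "insert k (insert 0 (vars \<phi>))"] finite_vars by blast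
  then have ka0: "ka \<noteq> 0" and kak: "ka \<noteq> k" and kav: "ka \<notin> vars \<phi>" by auto
  have envL: "sat UNIV F R \<phi> (\<sigma>(ka := a', k := w, 0 := z)) = sat UNIV F R \<phi> (\<sigma>(0:=z))" for a' w z
    by (rule sat_cong) (use kv kav in auto)
  define \<psi>L where "\<psi>L = Ex k (Conj (Eq (Var k) (Var 0)) (fAll 0 (fImp (Conj (Neg (fLt rl 0 ka)) (Neg (fLt rl k 0))) \<phi>)))"
  define L where "L = {t. \<forall>s. a \<le> s \<and> s \<le> t \<longrightarrow> s \<in> ?S}"
  have LDef: "Def \<psi>L (\<sigma>(ka:=a)) = L"
    unfolding \<psi>L_def L_def Def_def by (simp add: k0 ka0 kak envL not_less)
  obtain C where C: "finite C" "\<forall>S\<in>C. piece S" "L = \<Union>C" using rep[of \<psi>L "\<sigma>(ka:=a)"] LDef by metis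
  have dc: "t' \<in> \<Union>C" if "t' \<le> t" "t \<in> \<Union>C" for t t'
  proof -
    have "t \<in> L" using that C(3) by simp
    then have "t' \<in> L" unfolding L_def using that(1) by (auto intro: order_trans)
    then show ?thesis using C(3) by simp
  qed
  have aL: "a \<in> L" using aS unfolding L_def by auto
  have bL: "b \<notin> L" using bS ab unfolding L_def by (auto intro!: exI[of _ b])
  have "\<exists>p. (\<forall>t<p. t \<in> \<Union>C) \<and> (\<forall>t>p. t \<notin> \<Union>C)"
  proof (rule sup_union[OF C(1) C(2)])
    show "\<And>t t'. t' \<le> t \<Longrightarrow> t \<in> \<Union>C \<Longrightarrow> t' \<in> \<Union>C" by (rule dc)
    show "a \<in> \<Union>C" using aL C(3) by simp
    show "b \<notin> \<Union>C" using bL C(3) by simp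
  qed
  then obtain p where p1: "\<forall>t<p. t \<in> L" and p2: "\<forall>t>p. t \<notin> L" using C(3) by blast
  have ap: "a \<le> p" using p2 aL by (meson not_le)
  have pb: "p \<le> b" using p1 bL by (meson not_le)
  define B where "B = {y. \<not> (\<exists>l u. l < y \<and> y < u \<and> ((y \<in> ?S \<and> (\<forall>s. l < s \<and> s < u \<longrightarrow> s \<in> ?S)) \<or> (y \<notin> ?S \<and> (\<forall>s. l < s \<and> s < u \<longrightarrow> s \<notin> ?S))))}"
  have pB: "p \<in> B"
  proof -
    have False if l: "l < p" "p < u" and cs: "(p \<in> ?S \<and> (\<forall>s. l < s \<and> s < u \<longrightarrow> s \<in> ?S)) \<or> (p \<notin> ?S \<and> (\<forall>s. l < s \<and> s < u \<longrightarrow> s \<notin> ?S))" for l u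
    proof (cases "p \<in> ?S")
      case True
      then have allS: "\<forall>s. l < s \<and> s < u \<longrightarrow> s \<in> ?S" using cs by blast
      define t where "t = (p + u) / 2"
      have pt: "p < t" "t < u" using l unfolding t_def by (auto simp: field_simps)
      then have "t \<notin> L" using p2 by blast
      then obtain s where s: "a \<le> s" "s \<le> t" "s \<notin> ?S" unfolding L_def by blast
      show False
      proof (cases "s < p")
        case True
        then have "s \<in> L" using p1 by blast
        then show False using s unfolding L_def by blast
      next
        case False
        then have "p \<le> s" by simp
        then show False using True allS s pt l by (metis le_less less_le_trans order.strict_trans2)
      qed
    next
      case False
      then have allN: "\<forall>s. l < s \<and> s < u \<longrightarrow> s \<notin> ?S" using cs by blast
      have "a \<noteq> p" using aS False by blast
      then have apl: "a < p" using ap by simp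
      define s0 where "s0 = (max l a + p) / 2"
      have ml: "max l a < p" using apl l by simp
      have s0: "max l a < s0" "s0 < p" using ml unfolding s0_def by (auto simp: field_simps)
      then have "s0 \<in> L" using p1 by blast
      moreover have "a \<le> s0" "l < s0" using s0 by auto
      ultimately have "s0 \<in> ?S" unfolding L_def by blast
      moreover have "s0 < u" using s0 l by simp
      ultimately show False using allN \<open>l < s0\<close> by blast
    qed
    then show ?thesis unfolding B_def by blast
  qed
  obtain lv where "lv \<notin> insert 0 (vars \<phi>)" using fresh_var[of "insert 0 (vars \<phi>)"] finite_vars by blast
  then have lv0: "lv \<noteq> 0" and lvv: "lv \<notin> vars \<phi>" by auto
  obtain uv where "uv \<notin> insert lv (insert 0 (vars \<phi>))" using fresh_var[of "insert lv (insert 0 (vars \<phi>))"] finite_vars by blast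
  then have uv0: "uv \<noteq> 0" and uvl: "uv \<noteq> lv" and uvv: "uv \<notin> vars \<phi>" by auto
  have envB1: "sat UNIV F R \<phi> (\<sigma>(0 := y, lv := l, uv := u)) = sat UNIV F R \<phi> (\<sigma>(0:=y))" for y l u
    by (rule sat_cong) (use lvv uvv in auto)
  have envB2: "sat UNIV F R \<phi> (\<sigma>(lv := l, uv := u, 0 := y)) = sat UNIV F R \<phi> (\<sigma>(0:=y))" for y l u
    by (rule sat_cong) (use lvv uvv in auto)
  define AI where "AI \<chi> = fAll 0 (fImp (Conj (fLt rl lv 0) (fLt rl 0 uv)) \<chi>)" for \<chi> :: "('f, 'r) fm"
  define \<psi>B where "\<psi>B = Neg (Ex lv (Ex uv (Conj (fLt rl lv 0) (Conj (fLt rl 0 uv) (fOr (Conj \<phi> (AI \<phi>)) (Conj (Neg \<phi>) (AI (Neg \<phi>))))))))"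
  have BDef: "Def \<psi>B \<sigma> = B"
    unfolding \<psi>B_def AI_def B_def Def_def using uvl by (simp add: lv0 uv0 uvl envB1 envB2 eq_commute[of lv uv])
  obtain CS where CS: "finite CS" "\<forall>S\<in>CS. piece S" "?S = \<Union>CS" using rep[of \<phi> \<sigma>] by blast
  obtain CB where CB: "finite CB" "\<forall>S\<in>CB. piece S" "B = \<Union>CB" using rep[of \<psi>B \<sigma>] BDef by metis
  have "finite J" if J: "J \<in> CB" for J
  proof -
    have "is_interval J \<or> (\<exists>a. J = {a})" using CB(2) J unfolding piece_def by blast
    then show ?thesis
    proof
      assume "is_interval J"
      then obtain y0 y1 where y: "y0 < y1" "{y0<..<y1} \<subseteq> J" using interval_contains by blast
      obtain u where u: "u > y0" "(\<forall>s. y0 < s \<and> s < u \<longrightarrow> s \<in> \<Union>CS) \<or> (\<forall>s. y0 < s \<and> s < u \<longrightarrow> s \<notin> \<Union>CS)"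
        using loc_union[OF CS(1) CS(2), of y0] by blast
      define u' where "u' = min u y1"
      have u': "y0 < u'" "u' \<le> u" "u' \<le> y1" using u y unfolding u'_def by auto
      define m where "m = (y0 + u') / 2"
      have m: "y0 < m" "m < u'" using u' unfolding m_def by (auto simp: field_simps)
      then have "m \<in> J" using y u' by auto
      then have mB: "m \<in> B" using CB(3) J by blast
      have "(m \<in> ?S \<and> (\<forall>s. y0 < s \<and> s < u' \<longrightarrow> s \<in> ?S)) \<or> (m \<notin> ?S \<and> (\<forall>s. y0 < s \<and> s < u' \<longrightarrow> s \<notin> ?S))"
      proof (cases "\<forall>s. y0 < s \<and> s < u \<longrightarrow> s \<in> \<Union>CS")
        case True
        then show ?thesis using CS(3) m u' by (metis order.strict_trans2)
      next
        case False
        then have "\<forall>s. y0 < s \<and> s < u \<longrightarrow> s \<notin> \<Union>CS" using u by blast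
        then show ?thesis using CS(3) m u' by (metis order.strict_trans2)
      qed
      then have "m \<notin> B" unfolding B_def using m by blast
      then show ?thesis using mB by blast
    qed auto
  qed
  then have "finite B" using CB by blast
  then have "Def \<psi>B \<sigma> \<subseteq> E" using fin_in_E[OF es rs, of \<psi>B] BDef by simp
  then have "p \<in> E" using pB BDef by blast
  then show False using noE ap pb by blast
qed

end


context omin begin

lemma same_type:
  assumes es: "elem_sub F R E" and rs: "range \<sigma> \<subseteq> E" and ab: "a < b"
    and noE: "\<not> (\<exists>e\<in>E. a \<le> e \<and> e \<le> b)"
  shows "sat UNIV F R \<phi> (\<sigma>(0:=a)) \<longleftrightarrow> sat UNIV F R \<phi> (\<sigma>(0:=b))"
proof (rule ccontr)
  assume ne: "\<not> (sat UNIV F R \<phi> (\<sigma>(0:=a)) \<longleftrightarrow> sat UNIV F R \<phi> (\<sigma>(0:=b)))"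
  show False
  proof (cases "sat UNIV F R \<phi> (\<sigma>(0:=a))")
    case True
    then have "a \<in> Def \<phi> \<sigma>" "b \<notin> Def \<phi> \<sigma>" using ne unfolding Def_def by auto
    then show False using sep[OF es rs ab] noE by blast
  next
    case False
    then have "a \<in> Def (Neg \<phi>) \<sigma>" "b \<notin> Def (Neg \<phi>) \<sigma>" using ne unfolding Def_def by auto
    then show False using sep[OF es rs ab] noE by blast
  qed
qed

end

theorem lemma3p19:
  fixes F :: "'f \<Rightarrow> ('a::linordered_field) list \<Rightarrow> 'a"
    and R :: "'r \<Rightarrow> 'a list \<Rightarrow> bool"
    and Op :: "'a set" and E E1 :: "'a set" and x :: 'a
  assumes "expands_orf F R" and "real_closed TYPE('a)" and "o_minimal F R"
    and "T_convex F R Op"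
    and "elem_sub F R E" and "elem_sub F R E1" and "E \<subseteq> E1" and "E1 \<noteq> UNIV"
    and "\<not> E \<subseteq> Op"
    and "x \<notin> E"
    and "\<not> realizes_type_in F R E E1 x"
  shows "(weakly_immediate Op E x \<longleftrightarrow> weakly_immediate Op E1 x) \<and>
         (weakly_immediate Op E x \<longrightarrow>
            same_cofinality (val_ord Op) (val_set Op x E) (val_ord Op) (val_set Op x E1))"
proof -
  obtain rl where rl: "\<And>a b. R rl [a, b] \<longleftrightarrow> a < b" using assms(1) unfolding expands_orf_def by blast
  interpret omin F R rl using rl assms(3) by unfold_locales
  have cs: "convex_subring Op" using assms(4) unfolding T_convex_def by blast
  have nr: "\<not> (\<forall>\<phi> \<sigma>. range \<sigma> \<subseteq> E \<longrightarrow> (sat UNIV F R \<phi> (\<sigma>(0 := x)) \<longleftrightarrow> sat UNIV F R \<phi> (\<sigma>(0 := y))))"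
    if "y \<in> E1" for y
    using assms(11) that unfolding realizes_type_in_def by blast
  have xE1: "x \<notin> E1" using nr[of x] by blast
  have approx: "\<exists>e\<in>E. (c \<le> e \<and> e \<le> x) \<or> (x \<le> e \<and> e \<le> c)" if c: "c \<in> E1" for c
  proof (rule ccontr)
    assume noE: "\<not> (\<exists>e\<in>E. (c \<le> e \<and> e \<le> x) \<or> (x \<le> e \<and> e \<le> c))"
    have "c \<noteq> x" using c xE1 by blast
    then have "c < x \<or> x < c" by auto
    then have "\<forall>\<phi> \<sigma>. range \<sigma> \<subseteq> E \<longrightarrow> (sat UNIV F R \<phi> (\<sigma>(0 := x)) \<longleftrightarrow> sat UNIV F R \<phi> (\<sigma>(0 := c)))"
    proof
      assume "c < x"
      moreover have "\<not> (\<exists>e\<in>E. c \<le> e \<and> e \<le> x)" using noE by blast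
      ultimately show ?thesis using same_type[OF assms(5)] by blast
    next
      assume "x < c"
      moreover have "\<not> (\<exists>e\<in>E. x \<le> e \<and> e \<le> c)" using noE by blast
      ultimately show ?thesis using same_type[OF assms(5)] by blast
    qed
    then show False using nr c by blast
  qed
  show ?thesis by (rule val_part[OF cs assms(7) xE1 approx])
qed


end
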